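(* Let $m\ge 1$, let $t_1<\cdots<t_m$ be real, and let $\omega_0,\dots,\omega_m$ be real numbers with $\sum_{k=0}^{\ell}\omega_k\ge 0$ for $\ell=0,\dots,m$ and such that $w(x)={\rm e}^{-x^2}\big(\omega_0+\sum_{k=1}^m\omega_k\theta(x-t_k)\big)$ is not identically zero. With $R_{n,k},r_{n,k}$ as in the context, the following hold: $$r_{n+1,k}=-r_{n,k}+\Big(t_k-\frac12\sum_{j=1}^mR_{n,j}\Big)R_{n,k},\qquad n\ge0,\ k=1,\dots,m,$$ and, for $n\ge1$ (whenever the denominators are nonzero), $$R_{n,1}=\frac{2r_{n,1}^2}{\Big(\sum_{k=1}^m r_{n,k}+n\Big)R_{n-1,1}},\qquad R_{n,k}=\frac{r_{n,k}^2R_{n-1,1}}{r_{n,1}^2R_{n-1,k}}R_{n,1},\quad k=2,\dots,m,$$ with initial values $$R_{0,k}=\frac{\omega_k{\rm e}^{-t_k^2}}{\int_{-\infty}^{+\infty}{\rm e}^{-x^2}\big(\omega_0+\sum_{j=1}^m\omega_j\theta(x-t_j)\big)dx},\qquad r_{0,k}=0.$$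
   Context: $\theta(y)=1$ for $y>0$ and $0$ otherwise. $P_n$ ($n\ge0$) is the monic degree-$n$ polynomial orthogonal with respect to $w$ on $\mathbb{R}$, $\int P_jP_kw\,dx=h_k\delta_{jk}$, $h_k>0$. For $k=1,\dots,m$: $R_{n,k}:=\omega_k{\rm e}^{-t_k^2}P_n(t_k)^2/h_n$ for $n\ge0$; $r_{n,k}:=\omega_k{\rm e}^{-t_k^2}P_n(t_k)P_{n-1}(t_k)/h_{n-1}$ for $n\ge1$, and $r_{0,k}:=0$. *)

theory Defs
  imports "HOL-Analysis.Analysis" "HOL-Computational_Algebra.Polynomial"
begin

definition theta :: "real \<Rightarrow> real" where
  "theta y = (if y > 0 then 1 else 0)"

definition wt :: "nat \<Rightarrow> (nat \<Rightarrow> real) \<Rightarrow> (nat \<Rightarrow> real) \<Rightarrow> real \<Rightarrow> real" where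
  "wt m \<omega> t x = exp (-(x^2)) * (\<omega> 0 + (\<Sum>k=1..m. \<omega> k * theta (x - t k)))"

definition hn :: "(nat \<Rightarrow> real poly) \<Rightarrow> (real \<Rightarrow> real) \<Rightarrow> nat \<Rightarrow> real" where
  "hn P w n = (LINT x|lborel. (poly (P n) x)^2 * w x)"

definition RR :: "(nat \<Rightarrow> real poly) \<Rightarrow> (real \<Rightarrow> real) \<Rightarrow> (nat \<Rightarrow> real) \<Rightarrow> (nat \<Rightarrow> real)
    \<Rightarrow> nat \<Rightarrow> nat \<Rightarrow> real" where
  "RR P w \<omega> t n k = \<omega> k * exp (-((t k)^2)) * (poly (P n) (t k))^2 / hn P w n"

definition rr :: "(nat \<Rightarrow> real poly) \<Rightarrow> (real \<Rightarrow> real) \<Rightarrow> (nat \<Rightarrow> real) \<Rightarrow> (nat \<Rightarrow> real)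
    \<Rightarrow> nat \<Rightarrow> nat \<Rightarrow> real" where
  "rr P w \<omega> t n k = (if n = 0 then 0 else
     \<omega> k * exp (-((t k)^2)) * poly (P n) (t k) * poly (P (n - 1)) (t k) / hn P w (n - 1))"

end

theory Submission
  imports Defs "HOL-Probability.Probability"
begin


lemma gauss_mono_int: "integrable lborel (\<lambda>x::real. exp (-(x^2)) * x^k)"
proof (cases "even k")
  case True
  then obtain j where k: "k = 2*j" by (auto elim: evenE)
  have "has_bochner_integral lborel (\<lambda>x::real. exp (-(x^2)) * x^(2*j)) (2 *\<^sub>R ((sqrt pi / 2) * (fact (2 * j) / (2 ^ (2 * j) * fact j))))"
    by (rule has_bochner_integral_even_function[OF gaussian_moment_even_pos]) (simp add: power_mult)
  then show ?thesis using k by (auto intro: integrable.intros)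
next
  case False
  then obtain j where k: "k = 2*j+1" by (auto elim: oddE)
  have "has_bochner_integral lborel (\<lambda>x::real. exp (-(x^2)) * x^(2*j+1)) 0"
    by (rule has_bochner_integral_odd_function[OF gaussian_moment_odd_pos]) (simp add: power_mult)
  then show ?thesis using k by (auto intro: integrable.intros)
qed

lemma gauss_poly_int: fixes q :: "real poly" shows "integrable lborel (\<lambda>x::real. poly q x * exp (-(x^2)))"
proof -
  have "(\<lambda>x::real. poly q x * exp (-(x^2))) = (\<lambda>x. \<Sum>i\<le>degree q. coeff q i * (exp (-(x^2)) * x^i))"
    by (simp add: poly_altdef sum_distrib_right mult.assoc mult.commute[of "exp _"])
  moreover have "integrable lborel (\<lambda>x. \<Sum>i\<le>degree q. coeff q i * (exp (-(x^2)) * x^i))"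
    by (rule Bochner_Integration.integrable_sum, rule integrable_mult_right, rule gauss_mono_int)
  ultimately show ?thesis by simp
qed

lemma gauss_poly_int_ind: fixes q :: "real poly" and a :: real
  shows "integrable lborel (\<lambda>x. indicator {a<..} x * (poly q x * exp (-(x^2))))"
  using integrable_mult_indicator[OF _ gauss_poly_int[of q], of "{a<..}"] by simp

lemma gauss_mono_lim: "((\<lambda>x::real. x^k * exp (-(x^2))) \<longlongrightarrow> 0) at_top"
proof -
  have l1: "((\<lambda>x::real. (x^2)^k / exp (x^2)) \<longlongrightarrow> 0) at_top"
    by (intro filterlim_compose[OF tendsto_power_div_exp_0] filterlim_pow_at_top filterlim_ident) auto
  have l2: "((\<lambda>x::real. (inverse x)^k) \<longlongrightarrow> 0^k) at_top"
    by (intro tendsto_power tendsto_inverse_0_at_top filterlim_ident)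
  have "((\<lambda>x::real. (x^2)^k / exp (x^2) * (inverse x)^k) \<longlongrightarrow> 0 * 0^k) at_top"
    by (rule tendsto_mult[OF l1 l2])
  then have l3: "((\<lambda>x::real. (x^2)^k / exp (x^2) * (inverse x)^k) \<longlongrightarrow> 0) at_top" by simp
  have ev: "\<forall>\<^sub>F x in at_top. (x^2)^k / exp (x^2) * (inverse x)^k = x^k * exp (-(x^2::real))"
    using eventually_gt_at_top[of "0::real"]
  proof (rule eventually_mono)
    fix x :: real assume "0 < x"
    then show "(x^2)^k / exp (x^2) * (inverse x)^k = x^k * exp (-(x^2))"
      by (simp add: exp_minus field_simps power_mult_distrib power2_eq_square power_inverse)
  qed
  show ?thesis by (rule Lim_transform_eventually[OF l3 ev])
qed

lemma gauss_poly_lim_top: fixes q :: "real poly" shows "((\<lambda>x::real. poly q x * exp (-(x^2))) \<longlongrightarrow> 0) at_top"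
proof -
  have "((\<lambda>x. \<Sum>i\<le>degree q. coeff q i * (x^i * exp (-(x^2)))) \<longlongrightarrow> (\<Sum>i\<le>degree q. coeff q i * 0)) at_top"
    by (intro tendsto_sum tendsto_mult tendsto_const gauss_mono_lim)
  moreover have "(\<lambda>x::real. poly q x * exp (-(x^2))) = (\<lambda>x. \<Sum>i\<le>degree q. coeff q i * (x^i * exp (-(x^2))))"
    by (simp add: poly_altdef sum_distrib_right mult.assoc mult.commute[of "exp _"])
  ultimately show ?thesis by simp
qed

lemma gauss_poly_lim_bot: fixes q :: "real poly" shows "((\<lambda>x::real. poly q x * exp (-(x^2))) \<longlongrightarrow> 0) at_bot"
proof -
  have "((\<lambda>x::real. poly (pcompose q [:0,-1:]) x * exp (-(x^2))) \<longlongrightarrow> 0) at_top"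
    by (rule gauss_poly_lim_top)
  then show ?thesis unfolding filterlim_at_bot_mirror by (simp add: poly_pcompose)
qed

lemma gauss_deriv: fixes q :: "real poly" shows "((\<lambda>x. poly q x * exp (-(x^2))) has_vector_derivative
     (poly (pderiv q) x * exp (-(x^2)) - 2 * (poly ([:0,1:] * q) x * exp (-(x^2))))) (at x)"
  unfolding has_real_derivative_iff_has_vector_derivative[symmetric]
  by (auto intro!: derivative_eq_intros simp: algebra_simps)

lemma gauss_ibp_half:
  fixes q :: "real poly" and a :: real
  shows
  "(LINT x|lborel. indicator {a<..} x * (poly (pderiv q) x * exp (-(x^2))))
   = 2 * (LINT x|lborel. indicator {a<..} x * (poly ([:0,1:] * q) x * exp (-(x^2)))) - poly q a * exp (-(a^2))"
proof -
  let ?f = "\<lambda>x. poly (pderiv q) x * exp (-(x^2)) - 2 * (poly ([:0,1:] * q) x * exp (-(x^2)))"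
  have int: "integrable lborel ?f"
    using gauss_poly_int[of "pderiv q"] gauss_poly_int[of "[:0,1:]*q"] by auto
  have "(LBINT x=ereal a..\<infinity>. ?f x) = 0 - poly q a * exp (-(a^2))"
  proof (rule interval_integral_FTC_integrable[where F="\<lambda>x. poly q x * exp (-(x^2))"])
    show "set_integrable lborel (einterval (ereal a) \<infinity>) ?f"
      unfolding set_integrable_def using int
      by (intro integrable_mult_indicator) auto
    show "(((\<lambda>x. poly q x * exp (-(x^2))) \<circ> real_of_ereal) \<longlongrightarrow> 0) (at_left \<infinity>)"
      unfolding ereal_tendsto_simps by (rule gauss_poly_lim_top)
    show "(((\<lambda>x. poly q x * exp (-(x^2))) \<circ> real_of_ereal) \<longlongrightarrow> poly q a * exp (-(a^2))) (at_right (ereal a))"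
      unfolding ereal_tendsto_simps
      by (intro tendsto_intros tendsto_within_subset[OF isCont_tendsto_compose] ) (auto intro!: continuous_intros)
  qed (insert gauss_deriv[of q], auto intro!: continuous_intros)
  then have "(LINT x|lborel. indicator {a<..} x * ?f x) = - poly q a * exp (-(a^2))"
    by (simp add: interval_lebesgue_integral_def set_lebesgue_integral_def)
  moreover have "(LINT x|lborel. indicator {a<..} x * ?f x) =
     (LINT x|lborel. indicator {a<..} x * (poly (pderiv q) x * exp (-(x^2))))
     - 2 * (LINT x|lborel. indicator {a<..} x * (poly ([:0,1:] * q) x * exp (-(x^2))))"
  proof -
    have "(\<lambda>x. indicator {a<..} x * ?f x) = (\<lambda>x. indicator {a<..} x * (poly (pderiv q) x * exp (-(x^2)))
       - 2 * (indicator {a<..} x * (poly ([:0,1:] * q) x * exp (-(x^2)))))"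
      by (auto simp: algebra_simps)
    moreover have "integrable lborel (\<lambda>x. indicator {a<..} x * (poly (pderiv q) x * exp (-(x^2))))"
      by (rule gauss_poly_int_ind)
    moreover have "integrable lborel (\<lambda>x. 2 * (indicator {a<..} x * (poly ([:0,1:] * q) x * exp (-(x^2)))))"
      using gauss_poly_int_ind[of a "[:0,1:]*q"] by (rule integrable_mult_right)
    ultimately show ?thesis
      by (simp add: Bochner_Integration.integral_diff)
  qed
  ultimately show ?thesis by simp
qed

lemma gauss_ibp_full:
  fixes q :: "real poly"
  shows
  "(LINT x|lborel. poly (pderiv q) x * exp (-(x^2)))
   = 2 * (LINT x|lborel. poly ([:0,1:] * q) x * exp (-(x^2)))"
proof -
  let ?f = "\<lambda>x. poly (pderiv q) x * exp (-(x^2)) - 2 * (poly ([:0,1:] * q) x * exp (-(x^2)))"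
  have int: "integrable lborel ?f"
    using gauss_poly_int[of "pderiv q"] gauss_poly_int[of "[:0,1:]*q"] by auto
  have "(LBINT x=-\<infinity>..\<infinity>. ?f x) = 0 - 0"
  proof (rule interval_integral_FTC_integrable[where F="\<lambda>x. poly q x * exp (-(x^2))"])
    show "set_integrable lborel (einterval (-\<infinity>) \<infinity>) ?f"
      unfolding set_integrable_def using int by simp
    show "(((\<lambda>x. poly q x * exp (-(x^2))) \<circ> real_of_ereal) \<longlongrightarrow> 0) (at_left \<infinity>)"
      unfolding ereal_tendsto_simps by (rule gauss_poly_lim_top)
    show "(((\<lambda>x. poly q x * exp (-(x^2))) \<circ> real_of_ereal) \<longlongrightarrow> 0) (at_right (-\<infinity>))"
      unfolding ereal_tendsto_simps by (rule gauss_poly_lim_bot)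
  qed (insert gauss_deriv[of q], auto intro!: continuous_intros)
  then have "(LINT x|lborel. ?f x) = 0"
    by (simp add: interval_lebesgue_integral_def set_lebesgue_integral_def)
  moreover have "integrable lborel (\<lambda>x. 2 * (poly ([:0,1:] * q) x * exp (-(x^2))))"
    by (intro integrable_mult_right gauss_poly_int)
  ultimately show ?thesis
    by (simp add: Bochner_Integration.integral_diff gauss_poly_int)
qed


locale opoly =
  fixes L :: "real poly \<Rightarrow> real" and P :: "nat \<Rightarrow> real poly"
  assumes L_add: "L (p + q) = L p + L q"
    and L_smult: "L (smult c p) = c * L p"
    and P_deg: "degree (P n) = n" and P_lc: "lead_coeff (P n) = 1"
    and orth: "j \<noteq> k \<Longrightarrow> L (P j * P k) = 0"
    and hpos: "L (P n * P n) > 0"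
begin

lemma L_zero: "L 0 = 0"
  using L_smult[of 0 0] by simp

lemma L_diff: "L (p - q) = L p - L q"
proof -
  have "p - q = p + smult (-1) q" by simp
  then show ?thesis using L_add[of p "smult (-1) q"] L_smult[of "-1" q] by simp
qed

lemma L_sum: "L (\<Sum>j\<in>A. f j) = (\<Sum>j\<in>A. L (f j))"
proof (cases "finite A")
  case True
  then show ?thesis by (induction A rule: finite_induct) (auto simp: L_zero L_add)
qed (simp add: L_zero)

lemma P_coeff_hi: "k < i \<Longrightarrow> coeff (P k) i = 0"
  using P_deg[of k] by (simp add: coeff_eq_0)

lemma P_coeff_top: "coeff (P k) k = 1"
  using P_lc[of k] P_deg[of k] by simp

lemma span: "(\<forall>i\<ge>n. coeff q i = 0) \<Longrightarrow> \<exists>c. q = (\<Sum>j<n. smult (c j) (P j))"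
proof (induction n arbitrary: q)
  case 0
  then have "q = 0" by (intro poly_eqI) auto
  then show ?case by simp
next
  case (Suc n)
  define q' where "q' = q - smult (coeff q n) (P n)"
  have "\<forall>i\<ge>n. coeff q' i = 0"
  proof (intro allI impI)
    fix i assume "n \<le> i"
    then consider "i = n" | "n < i" by linarith
    then show "coeff q' i = 0"
      by cases (use Suc.prems P_coeff_top P_coeff_hi in \<open>auto simp: q'_def\<close>)
  qed
  then obtain c where c: "q' = (\<Sum>j<n. smult (c j) (P j))" using Suc.IH by blast
  define c' where "c' = c(n := coeff q n)"
  have "q = q' + smult (coeff q n) (P n)" by (simp add: q'_def)
  also have "\<dots> = (\<Sum>j<Suc n. smult (c' j) (P j))"
    by (simp add: c c'_def)
  finally show ?case by blast
qed

lemma orth_low: assumes "\<forall>i\<ge>n. coeff q i = 0" shows "L (q * P n) = 0"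
proof -
  obtain c where c: "q = (\<Sum>j<n. smult (c j) (P j))" using span[OF assms] by blast
  have "L (q * P n) = (\<Sum>j<n. c j * L (P j * P n))"
    by (simp add: c sum_distrib_right L_sum L_smult)
  also have "\<dots> = 0" by (intro sum.neutral) (auto simp: orth)
  finally show ?thesis .
qed

lemma zero_crit:
  assumes "\<forall>i\<ge>Suc n. coeff D i = 0" and "\<forall>i\<le>n. L (D * P i) = 0"
  shows "D = 0"
proof -
  obtain c where c: "D = (\<Sum>j<Suc n. smult (c j) (P j))" using span[OF assms(1)] by blast
  have "c i = 0" if "i \<le> n" for i
  proof -
    have "L (D * P i) = (\<Sum>j<Suc n. c j * L (P j * P i))"
      by (simp only: c sum_distrib_right L_sum mult_smult_left L_smult)
    also have "\<dots> = (\<Sum>j<Suc n. if j = i then c i * L (P i * P i) else 0)"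
      by (intro sum.cong) (auto simp: orth)
    also have "\<dots> = c i * L (P i * P i)" using that by simp
    finally have "c i * L (P i * P i) = 0" using assms(2) that by simp
    then show ?thesis using hpos[of i] by simp
  qed
  then show ?thesis by (simp add: c)
qed

lemma xPP: assumes "1 \<le> n" shows "L (pCons 0 (P (n-1) * P n)) = L (P n * P n)"
proof -
  have "\<forall>i\<ge>n. coeff (pCons 0 (P (n-1)) - P n) i = 0"
  proof (intro allI impI)
    fix i assume "n \<le> i"
    then consider "i = n" | "n < i" by linarith
    then show "coeff (pCons 0 (P (n-1)) - P n) i = 0"
    proof cases
      case 1 then show ?thesis using assms P_coeff_top[of n] P_coeff_top[of "n-1"]
        by (cases i) auto
    next
      case 2 then show ?thesis using assms P_coeff_hi[of n i] P_coeff_hi[of "n-1" "i-1"]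
        by (cases i) auto
    qed
  qed
  from orth_low[OF this] have "L (pCons 0 (P (n-1)) * P n - P n * P n) = 0"
    by (simp add: algebra_simps)
  then show ?thesis by (simp add: L_diff)
qed

definition "alpha n = L (pCons 0 (P n * P n)) / L (P n * P n)"
definition "beta n = (if n = 0 then 0 else L (P n * P n) / L (P (n-1) * P (n-1)))"

lemma recurrence:
  "P (Suc n) = pCons 0 (P n) - smult (alpha n) (P n) - smult (beta n) (P (n-1))"
proof -
  define D where "D = P (Suc n) - pCons 0 (P n) + smult (alpha n) (P n) + smult (beta n) (P (n-1))"
  have c1: "\<forall>i\<ge>Suc n. coeff D i = 0"
  proof (intro allI impI)
    fix i assume "Suc n \<le> i"
    then consider "i = Suc n" | "Suc n < i" by linarith
    then show "coeff D i = 0"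
    proof cases
      case 1 then show ?thesis using P_coeff_top[of n] P_coeff_top[of "Suc n"] P_coeff_hi[of n "Suc n"]
          P_coeff_hi[of "n-1" "Suc n"] by (simp add: D_def)
    next
      case 2 then show ?thesis using P_coeff_hi[of n "i-1"] P_coeff_hi[of "Suc n" i] P_coeff_hi[of n i]
          P_coeff_hi[of "n-1" i] by (cases i) (auto simp: D_def)
    qed
  qed
  have LD: "L (D * P i) = L (P (Suc n) * P i) - L (pCons 0 (P n * P i)) + alpha n * L (P n * P i)
     + beta n * L (P (n-1) * P i)" for i
    by (simp add: D_def algebra_simps L_add L_diff L_smult)
  have c2: "\<forall>i\<le>n. L (D * P i) = 0"
  proof (intro allI impI)
    fix i assume i: "i \<le> n"
    consider "i = n" | "n \<ge> 1 \<and> i = n - 1" | "i + 1 < n" using i by linarith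
    then show "L (D * P i) = 0"
    proof cases
      case 1
      have "beta n * L (P (n-1) * P n) = 0"
        by (cases n) (auto simp: beta_def orth)
      then show ?thesis using 1 hpos[of n] by (simp add: LD orth alpha_def)
    next
      case 2
      have "L (pCons 0 (P n * P (n-1))) = L (P n * P n)"
        using xPP[of n] 2 by (simp add: mult.commute)
      moreover have "n \<noteq> n - 1" "Suc n \<noteq> n - 1" using 2 by auto
      ultimately show ?thesis using 2 hpos[of "n-1"] orth[of n "n-1"] orth[of "Suc n" "n-1"] by (simp add: LD beta_def)
    next
      case 3
      have "\<forall>j\<ge>n. coeff (pCons 0 (P i)) j = 0"
        using 3 P_coeff_hi[of i] by (auto simp: coeff_pCons split: nat.split)
      from orth_low[OF this] have "L (pCons 0 (P n * P i)) = 0"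
        by (simp add: mult.commute)
      then show ?thesis using 3 by (simp add: LD orth)
    qed
  qed
  have "D = 0" by (rule zero_crit[OF c1 c2])
  then show ?thesis unfolding D_def by (simp add: algebra_simps)
qed

lemma pderiv_sq: "L (pderiv (P n * P n)) = 0"
proof -
  have "\<forall>i\<ge>n. coeff (pderiv (P n)) i = 0"
    using P_coeff_hi by (auto simp: coeff_pderiv)
  from orth_low[OF this] show ?thesis
    by (simp only: pderiv_mult L_add) (simp add: mult.commute)
qed

lemma pderiv_adj: assumes "1 \<le> n"
  shows "L (pderiv (P n * P (n-1))) = real n * L (P (n-1) * P (n-1))"
proof -
  have "\<forall>i\<ge>n. coeff (pderiv (P (n-1))) i = 0"
    using P_coeff_hi assms by (auto simp: coeff_pderiv)
  from orth_low[OF this] have a: "L (P n * pderiv (P (n-1))) = 0"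
    by (simp add: mult.commute)
  have "\<forall>i\<ge>n-1. coeff (pderiv (P n) - smult (real n) (P (n-1))) i = 0"
  proof (intro allI impI)
    fix i assume "n - 1 \<le> i"
    then consider "i = n - 1" | "n - 1 < i" by linarith
    then show "coeff (pderiv (P n) - smult (real n) (P (n-1))) i = 0"
    proof cases
      case 1 then show ?thesis using assms P_coeff_top[of n] P_coeff_top[of "n-1"]
        by (simp add: coeff_pderiv)
    next
      case 2 then show ?thesis using assms P_coeff_hi[of n "Suc i"] P_coeff_hi[of "n-1" i]
        by (simp add: coeff_pderiv)
    qed
  qed
  from orth_low[OF this] have b: "L (pderiv (P n) * P (n-1)) = real n * L (P (n-1) * P (n-1))"
    by (simp add: algebra_simps L_diff L_smult)
  show ?thesis using a b by (simp only: pderiv_mult L_add) (simp add: mult.commute)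
qed

end


lemma theta_ind: "theta (x - a) = indicator {a<..} x"
  by (simp add: theta_def indicator_def)

lemma wt_expand:
  fixes q :: "real poly"
  shows "poly q x * wt m \<omega> t x = \<omega> 0 * (poly q x * exp (-(x^2))) +
     (\<Sum>k=1..m. \<omega> k * (indicator {t k<..} x * (poly q x * exp (-(x^2)))))"
proof -
  have "poly q x * wt m \<omega> t x = \<omega> 0 * (poly q x * exp (-(x^2))) +
     (poly q x * exp (-(x^2))) * (\<Sum>k=1..m. \<omega> k * indicator {t k<..} x)"
    by (simp only: wt_def theta_ind) (simp only: algebra_simps)
  also have "(poly q x * exp (-(x^2))) * (\<Sum>k=1..m. \<omega> k * indicator {t k<..} x) =
     (\<Sum>k=1..m. \<omega> k * (indicator {t k<..} x * (poly q x * exp (-(x^2)))))"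
    by (simp only: sum_distrib_left) (intro sum.cong refl, simp only: ac_simps)
  finally show ?thesis .
qed

lemma wt_int:
  fixes q :: "real poly"
  shows "integrable lborel (\<lambda>x. poly q x * wt m \<omega> t x)"
proof -
  have "integrable lborel (\<lambda>x. \<omega> 0 * (poly q x * exp (-(x^2))) +
     (\<Sum>k=1..m. \<omega> k * (indicator {t k<..} x * (poly q x * exp (-(x^2))))))"
    by (intro Bochner_Integration.integrable_add integrable_mult_right gauss_poly_int
         Bochner_Integration.integrable_sum gauss_poly_int_ind)
  then show ?thesis by (simp only: wt_expand)
qed

lemma wt_L:
  fixes q :: "real poly"
  shows "(LINT x|lborel. poly q x * wt m \<omega> t x) = \<omega> 0 * (LINT x|lborel. poly q x * exp (-(x^2))) +
     (\<Sum>k=1..m. \<omega> k * (LINT x|lborel. indicator {t k<..} x * (poly q x * exp (-(x^2)))))"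
proof -
  have "(LINT x|lborel. poly q x * wt m \<omega> t x) = (LINT x|lborel. \<omega> 0 * (poly q x * exp (-(x^2))) +
     (\<Sum>k=1..m. \<omega> k * (indicator {t k<..} x * (poly q x * exp (-(x^2))))))"
    by (simp only: wt_expand)
  also have "\<dots> = \<omega> 0 * (LINT x|lborel. poly q x * exp (-(x^2))) +
     (\<Sum>k=1..m. \<omega> k * (LINT x|lborel. indicator {t k<..} x * (poly q x * exp (-(x^2)))))"
  proof -
    have s: "(LINT x|lborel. (\<Sum>k=1..m. \<omega> k * (indicator {t k<..} x * (poly q x * exp (-(x^2)))))) =
      (\<Sum>k=1..m. (LINT x|lborel. \<omega> k * (indicator {t k<..} x * (poly q x * exp (-(x^2))))))"
      by (rule Bochner_Integration.integral_sum) (intro integrable_mult_right gauss_poly_int_ind)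
    have a: "integrable lborel (\<lambda>x. \<omega> 0 * (poly q x * exp (-(x^2))))"
      by (intro integrable_mult_right gauss_poly_int)
    have b: "integrable lborel (\<lambda>x. \<Sum>k=1..m. \<omega> k * (indicator {t k<..} x * (poly q x * exp (-(x^2)))))"
      by (intro Bochner_Integration.integrable_sum integrable_mult_right gauss_poly_int_ind)
    show ?thesis
      by (simp only: Bochner_Integration.integral_add[OF a b] s integral_mult_right_zero)
  qed
  finally show ?thesis .
qed

lemma xq: "[:0,1:] * (q :: real poly) = pCons 0 q"
  by (simp add: smult_one)

lemma wt_ibp:
  fixes q :: "real poly"
  shows "(LINT x|lborel. poly (pderiv q) x * wt m \<omega> t x) =
     2 * (LINT x|lborel. poly (pCons 0 q) x * wt m \<omega> t x)
     - (\<Sum>k=1..m. \<omega> k * exp (-((t k)^2)) * poly q (t k))"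
proof -
  note h = gauss_ibp_full[of q, unfolded xq] gauss_ibp_half[of _ q, unfolded xq]
  show ?thesis
    unfolding wt_L h
    by (simp add: algebra_simps sum_subtractf sum_distrib_left)
qed

theorem lemma2p7:
  fixes m :: nat and t \<omega> :: "nat \<Rightarrow> real" and P :: "nat \<Rightarrow> real poly"
  assumes "m \<ge> 1"
    and "\<forall>i j. 1 \<le> i \<and> i < j \<and> j \<le> m \<longrightarrow> t i < t j"
    and "\<forall>l\<le>m. (\<Sum>k=0..l. \<omega> k) \<ge> 0"
    and "\<exists>x. wt m \<omega> t x \<noteq> 0"
    and "\<forall>n. degree (P n) = n \<and> lead_coeff (P n) = 1"
    and "\<forall>j k. j \<noteq> k \<longrightarrow>
           (LINT x|lborel. poly (P j) x * poly (P k) x * wt m \<omega> t x) = 0"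
    and "\<forall>n. hn P (wt m \<omega> t) n > 0"
  shows
    "(\<forall>n k. 1 \<le> k \<and> k \<le> m \<longrightarrow>
        rr P (wt m \<omega> t) \<omega> t (n + 1) k =
          - rr P (wt m \<omega> t) \<omega> t n k
          + (t k - (1/2) * (\<Sum>j=1..m. RR P (wt m \<omega> t) \<omega> t n j)) * RR P (wt m \<omega> t) \<omega> t n k)
   \<and> (\<forall>n\<ge>1.
        ((\<Sum>k=1..m. rr P (wt m \<omega> t) \<omega> t n k) + real n) * RR P (wt m \<omega> t) \<omega> t (n - 1) 1 \<noteq> 0
        \<longrightarrow> RR P (wt m \<omega> t) \<omega> t n 1 =
             2 * (rr P (wt m \<omega> t) \<omega> t n 1)^2 /
             (((\<Sum>k=1..m. rr P (wt m \<omega> t) \<omega> t n k) + real n) * RR P (wt m \<omega> t) \<omega> t (n - 1) 1))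
   \<and> (\<forall>n\<ge>1. \<forall>k. 2 \<le> k \<and> k \<le> m \<longrightarrow>
        (rr P (wt m \<omega> t) \<omega> t n 1)^2 * RR P (wt m \<omega> t) \<omega> t (n - 1) k \<noteq> 0
        \<longrightarrow> RR P (wt m \<omega> t) \<omega> t n k =
             (rr P (wt m \<omega> t) \<omega> t n k)^2 * RR P (wt m \<omega> t) \<omega> t (n - 1) 1 /
             ((rr P (wt m \<omega> t) \<omega> t n 1)^2 * RR P (wt m \<omega> t) \<omega> t (n - 1) k)
             * RR P (wt m \<omega> t) \<omega> t n 1)
   \<and> (\<forall>k. 1 \<le> k \<and> k \<le> m \<longrightarrow>
        RR P (wt m \<omega> t) \<omega> t 0 k = \<omega> k * exp (-((t k)^2)) / (LINT x|lborel. wt m \<omega> t x)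
        \<and> rr P (wt m \<omega> t) \<omega> t 0 k = 0)"
proof -
  define W where "W = wt m \<omega> t"
  define Lf where "Lf = (\<lambda>q::real poly. LINT x|lborel. poly q x * W x)"
  have Ladd: "Lf (p + q) = Lf p + Lf q" for p q
    unfolding Lf_def W_def
    by (simp add: distrib_right Bochner_Integration.integral_add wt_int)
  have Lsmult: "Lf (smult c p) = c * Lf p" for c p
    unfolding Lf_def by (simp add: mult.assoc)
  have hnL: "hn P W n = Lf (P n * P n)" for n
    unfolding hn_def Lf_def by (simp add: power2_eq_square)
  have orth: "j \<noteq> k \<Longrightarrow> Lf (P j * P k) = 0" for j k
    using assms(6) unfolding Lf_def W_def by simp
  interpret op: opoly Lf P
  proof unfold_locales
    fix n
    show "degree (P n) = n" using assms(5) by blast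
    show "lead_coeff (P n) = 1" using assms(5) by blast
    show "Lf (P n * P n) > 0" using assms(7) hnL[of n] unfolding W_def by metis
  qed (auto simp: Ladd Lsmult orth)
  have ibp: "Lf (pderiv q) = 2 * Lf (pCons 0 q) - (\<Sum>k=1..m. \<omega> k * exp (-((t k)^2)) * poly q (t k))" for q
    unfolding Lf_def W_def by (rule wt_ibp)
  define h where "h n = Lf (P n * P n)" for n
  have hpos: "h n > 0" for n unfolding h_def by (rule op.hpos)
  have RRe: "RR P W \<omega> t n k = \<omega> k * exp (-((t k)^2)) * (poly (P n) (t k))^2 / h n" for n k
    by (simp add: RR_def hnL h_def)
  have rre: "rr P W \<omega> t n k = (if n = 0 then 0 else
     \<omega> k * exp (-((t k)^2)) * poly (P n) (t k) * poly (P (n - 1)) (t k) / h (n - 1))" for n k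
    by (simp add: rr_def hnL h_def)
  have alpha: "op.alpha n = (1/2) * (\<Sum>j=1..m. RR P W \<omega> t n j)" for n
  proof -
    have "0 = 2 * Lf (pCons 0 (P n * P n)) - (\<Sum>k=1..m. \<omega> k * exp (-((t k)^2)) * (poly (P n) (t k))^2)"
      using ibp[of "P n * P n"] op.pderiv_sq[of n] by (simp add: power2_eq_square)
    then have "Lf (pCons 0 (P n * P n)) = (1/2) * (\<Sum>k=1..m. \<omega> k * exp (-((t k)^2)) * (poly (P n) (t k))^2)"
      by simp
    then show ?thesis
      unfolding op.alpha_def RRe using hpos[of n] by (simp add: sum_divide_distrib[symmetric] h_def field_simps)
  qed
  have beta: "op.beta n = (if n = 0 then 0 else h n / h (n-1))" for n
    by (simp add: op.beta_def h_def)
  have sumr: "(\<Sum>k=1..m. rr P W \<omega> t n k) + real n = 2 * h n / h (n-1)" if n: "1 \<le> n" for n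
  proof -
    have "real n * h (n-1) = 2 * Lf (pCons 0 (P n * P (n-1))) - (\<Sum>k=1..m. \<omega> k * exp (-((t k)^2)) * (poly (P n) (t k) * poly (P (n-1)) (t k)))"
      using ibp[of "P n * P (n-1)"] op.pderiv_adj[OF n] by (simp add: h_def)
    moreover have "Lf (pCons 0 (P n * P (n-1))) = h n"
      using op.xPP[OF n] by (simp add: mult.commute h_def)
    moreover have "(\<Sum>k=1..m. rr P W \<omega> t n k) = (\<Sum>k=1..m. \<omega> k * exp (-((t k)^2)) * (poly (P n) (t k) * poly (P (n-1)) (t k))) / h (n-1)"
      using n unfolding rre by (simp add: sum_divide_distrib mult.assoc)
    ultimately show ?thesis using hpos[of "n-1"] by (simp add: field_simps)
  qed
  have P0: "P 0 = 1"
  proof (rule poly_eqI)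
    fix i show "coeff (P 0) i = coeff 1 i"
      using op.P_coeff_top[of 0] op.P_coeff_hi[of 0 i] by (cases i) auto
  qed
  have c1: "rr P W \<omega> t (n + 1) k = - rr P W \<omega> t n k
          + (t k - (1/2) * (\<Sum>j=1..m. RR P W \<omega> t n j)) * RR P W \<omega> t n k" for n k
  proof -
    have rec: "poly (P (n+1)) (t k) = (t k - op.alpha n) * poly (P n) (t k) - op.beta n * poly (P (n-1)) (t k)"
    proof -
      have "poly (P (Suc n)) (t k) = poly (pCons 0 (P n) - smult (op.alpha n) (P n) - smult (op.beta n) (P (n-1))) (t k)"
        by (subst op.recurrence[of n]) (rule refl)
      then show ?thesis by (simp add: algebra_simps)
    qed
    show ?thesis
    proof (cases n)
      case 0
      then show ?thesis using hpos[of 0] unfolding alpha[symmetric] unfolding rre RRe rec beta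
        by (simp add: field_simps power2_eq_square)
    next
      case (Suc n')
      then show ?thesis using hpos[of n] hpos[of n'] unfolding alpha[symmetric] unfolding rre RRe rec beta
        by (simp add: field_simps power2_eq_square)
    qed
  qed
  have c2: "RR P W \<omega> t n 1 =
             2 * (rr P W \<omega> t n 1)^2 /
             (((\<Sum>k=1..m. rr P W \<omega> t n k) + real n) * RR P W \<omega> t (n - 1) 1)"
    if n: "n \<ge> 1" and nz: "((\<Sum>k=1..m. rr P W \<omega> t n k) + real n) * RR P W \<omega> t (n - 1) 1 \<noteq> 0" for n
  proof -
    from nz have nz': "\<omega> 1 \<noteq> 0" "poly (P (n-1)) (t 1) \<noteq> 0" unfolding RRe by auto
    show ?thesis unfolding sumr[OF n] using n nz' hpos[of n] hpos[of "n-1"] unfolding rre RRe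
      by (simp add: field_simps power2_eq_square)
  qed
  have c3: "RR P W \<omega> t n k =
             (rr P W \<omega> t n k)^2 * RR P W \<omega> t (n - 1) 1 /
             ((rr P W \<omega> t n 1)^2 * RR P W \<omega> t (n - 1) k)
             * RR P W \<omega> t n 1"
    if n: "n \<ge> 1" and nz: "(rr P W \<omega> t n 1)^2 * RR P W \<omega> t (n - 1) k \<noteq> 0" for n k
  proof -
    from nz n have nz': "\<omega> 1 \<noteq> 0" "poly (P (n-1)) (t 1) \<noteq> 0" "poly (P n) (t 1) \<noteq> 0"
       "\<omega> k \<noteq> 0" "poly (P (n-1)) (t k) \<noteq> 0" unfolding RRe rre by auto
    show ?thesis using n nz' hpos[of n] hpos[of "n-1"] unfolding rre RRe
      by (simp add: field_simps power2_eq_square)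
  qed
  have c4: "RR P W \<omega> t 0 k = \<omega> k * exp (-((t k)^2)) / (LINT x|lborel. W x)
        \<and> rr P W \<omega> t 0 k = 0" for k
    by (simp add: RR_def hn_def P0 rr_def)
  show ?thesis
    unfolding W_def[symmetric] using c1 c2 c3 c4 by blast
qed

end
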